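(* Let an operational theory contain two binary-outcome measurements, a which-way measurement $Z$ and a which-phase measurement $X$, each with outcomes in $\{+1,-1\}$, and suppose the theory has $A_1^2$-symmetry relative to $Z$ and $X$. For a state $\vec{s}$, define the path distinguishability $\mathcal{P}(\vec{s}) = |\langle Z\rangle_{\vec{s}}| = |\mathbb{P}(+1|Z,\vec{s})-\mathbb{P}(-1|Z,\vec{s})|$ and the fringe visibility $\mathcal{V}(\vec{s}) = |\langle X\rangle_{\vec{s}}| = |\mathbb{P}(+1|X,\vec{s})-\mathbb{P}(-1|X,\vec{s})|$. If the operational theory admits a (generalized-)noncontextual ontological model, then every state $\vec{s}$ of the theory satisfies $$\mathcal{V}(\vec{s}) + \mathcal{P}(\vec{s}) \le 1.$$
   Context: An operational theory (for a single system, prepare-measure scenario) specifies a set of preparations $P$, measurements $M$, and probabilities $\mathbb{P}(y|M,P)$ of outcome $y$ of $M$ given $P$. In the generalized-probabilistic-theory representation each preparation is represented by a real vector $\vec{s}_P$ (its "operational state") and each effect $[y|M]$ by a real vector $\vec{e}_{y|M}$ with $\mathbb{P}(y|M,P)=\vec{s}_P\cdot\vec{e}_{y|M}$; two preparations are operationally equivalent iff they give identical statistics for all measurements, i.e. iff they have the same vector. The set of operational states is assumed closed under convex mixtures. For a measurement $M$ with outcomes in $\{+1,-1\}$, $\langle M\rangle_{\vec{s}} = \mathbb{P}(+1|M,\vec{s})-\mathbb{P}(-1|M,\vec{s})$, and $|\langle M\rangle_{\vec{s}}|$ is called the $M$-predictability. An ontological model assigns a (finite) set $\Lambda$, to each preparation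 $P$ a probability distribution $\mu(\lambda|P)$ on $\Lambda$, and to each measurement $M$ a conditional distribution $\xi(y|M,\lambda)$, such that $\mathbb{P}(y|M,P)=\sum_{\lambda}\xi(y|M,\lambda)\mu(\lambda|P)$. It is (generalized, preparation-)noncontextual if operationally equivalent preparations are assigned the same distribution; in particular, if $\sum_i w_i\vec{s}_i=\sum_j w'_j\vec{s}'_j$ for probability weights $w,w'$, then $\sum_i w_i\mu(\cdot|P_i)=\sum_j w'_j\mu(\cdot|P'_j)$. A state $\vec{s}_1$ satisfies the $A_1^2$-orbit-realizability condition relative to measurements $M,M'$ (outcomes $\pm1$) if there exist operational states $\vec{s}_2,\vec{s}_3,\vec{s}_4$ in the theory such that $\langle M\rangle_{\vec{s}_1}=\langle M\rangle_{\vec{s}_2}=-\langle M\rangle_{\vec{s}_3}=-\langle M\rangle_{\vec{s}_4}$, $\langle M'\rangle_{\vec{s}_1}=-\langle M'\rangle_{\vec{s}_2}=-\langle M'\rangle_{\vec{s}_3}=\langle M'\rangle_{\vec{s}_4}$, and $\tfrac12\vec{s}_1+\tfrac12\vec{s}_3=\tfrac12\vec{s}_2+\tfrac12\vec{s}_4$. The theory has $A_1^2$-symmetry relative to $M,M'$ if every operational state satisfies this condition. *)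

theory Defs
  imports "HOL-Analysis.Analysis"
begin

text \<open>A binary-outcome measurement M with outcomes +1,-1 is given by
  its effect map  e :: int => 'a  (only the values e 1 and e (-1) matter), and
  P(y|M,s) = s \<bullet> e y.\<close>

definition prob :: "(int \<Rightarrow> 'a::euclidean_space) \<Rightarrow> int \<Rightarrow> 'a \<Rightarrow> real" where
  "prob e y s = s \<bullet> e y"

definition expval :: "(int \<Rightarrow> 'a::euclidean_space) \<Rightarrow> 'a \<Rightarrow> real" where
  "expval e s = prob e 1 s - prob e (-1) s"

definition operational_theory ::
  "'a::euclidean_space set \<Rightarrow> (int \<Rightarrow> 'a) \<Rightarrow> (int \<Rightarrow> 'a) \<Rightarrow> bool" where
  "operational_theory S eM eM' \<longleftrightarrow>
     convex S \<and>
     (\<forall>s\<in>S. \<forall>e\<in>{eM, eM'}.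
        prob e 1 s \<ge> 0 \<and> prob e (-1) s \<ge> 0 \<and> prob e 1 s + prob e (-1) s = 1)"

definition A12_orbit_realizable ::
  "'a::euclidean_space set \<Rightarrow> (int \<Rightarrow> 'a) \<Rightarrow> (int \<Rightarrow> 'a) \<Rightarrow> 'a \<Rightarrow> bool" where
  "A12_orbit_realizable S eM eM' s1 \<longleftrightarrow>
     (\<exists>s2\<in>S. \<exists>s3\<in>S. \<exists>s4\<in>S.
        expval eM s1 = expval eM s2 \<and> expval eM s2 = - expval eM s3 \<and>
        - expval eM s3 = - expval eM s4 \<and>
        expval eM' s1 = - expval eM' s2 \<and> - expval eM' s2 = - expval eM' s3 \<and>
        - expval eM' s3 = expval eM' s4 \<and>
        (1/2) *\<^sub>R s1 + (1/2) *\<^sub>R s3 = (1/2) *\<^sub>R s2 + (1/2) *\<^sub>R s4)"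

definition A12_symmetric ::
  "'a::euclidean_space set \<Rightarrow> (int \<Rightarrow> 'a) \<Rightarrow> (int \<Rightarrow> 'a) \<Rightarrow> bool" where
  "A12_symmetric S eM eM' \<longleftrightarrow> (\<forall>s\<in>S. A12_orbit_realizable S eM eM' s)"

text \<open>Ontological model with finite ontic state space (the finite type 'l).
  mu s is the distribution assigned to (preparations with operational state) s;
  xiM y lam is the response function xi(y|M,lam) for outcomes y in {+1,-1}.\<close>
definition ontological_model ::
  "'a::euclidean_space set \<Rightarrow> (int \<Rightarrow> 'a) \<Rightarrow> (int \<Rightarrow> 'a) \<Rightarrow>
   ('a \<Rightarrow> 'l::finite \<Rightarrow> real) \<Rightarrow> (int \<Rightarrow> 'l \<Rightarrow> real) \<Rightarrow> (int \<Rightarrow> 'l \<Rightarrow> real) \<Rightarrow> bool" where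
  "ontological_model S eM eM' mu xiM xiM' \<longleftrightarrow>
     (\<forall>s\<in>S. (\<forall>l. mu s l \<ge> 0) \<and> (\<Sum>l\<in>UNIV. mu s l) = 1) \<and>
     (\<forall>xi\<in>{xiM, xiM'}. \<forall>l. xi 1 l \<ge> 0 \<and> xi (-1) l \<ge> 0 \<and> xi 1 l + xi (-1) l = 1) \<and>
     (\<forall>s\<in>S. \<forall>y\<in>{1, -1}.
        prob eM y s = (\<Sum>l\<in>UNIV. xiM y l * mu s l) \<and>
        prob eM' y s = (\<Sum>l\<in>UNIV. xiM' y l * mu s l))"

definition prep_noncontextual ::
  "'a::euclidean_space set \<Rightarrow> ('a \<Rightarrow> 'l \<Rightarrow> real) \<Rightarrow> bool" where
  "prep_noncontextual S mu \<longleftrightarrow>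
     (\<forall>(I::nat set) (w::nat \<Rightarrow> real) (s::nat \<Rightarrow> 'a) (J::nat set) (w'::nat \<Rightarrow> real) (s'::nat \<Rightarrow> 'a).
        finite I \<and> finite J \<and>
        (\<forall>i\<in>I. w i \<ge> 0 \<and> s i \<in> S) \<and> sum w I = 1 \<and>
        (\<forall>j\<in>J. w' j \<ge> 0 \<and> s' j \<in> S) \<and> sum w' J = 1 \<and>
        (\<Sum>i\<in>I. w i *\<^sub>R s i) = (\<Sum>j\<in>J. w' j *\<^sub>R s' j)
        \<longrightarrow> (\<forall>l. (\<Sum>i\<in>I. w i * mu (s i) l) = (\<Sum>j\<in>J. w' j * mu (s' j) l)))"

end

theory Submission
  imports Defs
begin

lemma key_pt:
  fixes p1 p2 p3 p4 r q sg tu :: real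
  assumes "p1 \<ge> 0" "p2 \<ge> 0" "p3 \<ge> 0" "p4 \<ge> 0" "p1 + p3 = p2 + p4"
    and "\<bar>r\<bar> \<le> 1" "\<bar>q\<bar> \<le> 1" "\<bar>sg\<bar> \<le> 1" "\<bar>tu\<bar> \<le> 1"
  shows "sg * r * (p1 - p4) + tu * q * (p1 - p2) \<le> p1 + p3"
proof -
  have a: "\<bar>sg * r\<bar> \<le> 1" using assms by (simp add: abs_mult mult_le_one)
  have b: "\<bar>tu * q\<bar> \<le> 1" using assms by (simp add: abs_mult mult_le_one)
  have "sg * r * (p1 - p4) \<le> \<bar>p1 - p4\<bar>"
    by (metis a abs_ge_self abs_mult dual_order.trans mult_left_le_one_le abs_ge_zero mult.commute)
  moreover have "tu * q * (p1 - p2) \<le> \<bar>p1 - p2\<bar>"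
    by (metis b abs_ge_self abs_mult dual_order.trans mult_left_le_one_le abs_ge_zero mult.commute)
  moreover have "\<bar>p1 - p4\<bar> + \<bar>p1 - p2\<bar> \<le> p1 + p3" using assms(1-5) by linarith
  ultimately show ?thesis by linarith
qed

lemma sumlin: fixes a b :: real shows "(\<Sum>l\<in>A. a*f1 l + a*f2 l - a*f3 l - a*f4 l + (b*g1 l - b*g2 l - b*g3 l + b*g4 l)) = a*(sum f1 A + sum f2 A - sum f3 A - sum f4 A) + b*(sum g1 A - sum g2 A - sum g3 A + sum g4 A)"
  by (simp add: sum.distrib sum_subtractf sum_distrib_left algebra_simps)

theorem corollary1:
  fixes S :: "'a::euclidean_space set"
    and eZ eX :: "int \<Rightarrow> 'a"
    and mu :: "'a \<Rightarrow> 'l::finite \<Rightarrow> real"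
    and xiZ xiX :: "int \<Rightarrow> 'l \<Rightarrow> real"
    and s :: 'a
  assumes "operational_theory S eZ eX"
    and "A12_symmetric S eZ eX"
    and "ontological_model S eZ eX mu xiZ xiX"
    and "prep_noncontextual S mu"
    and "s \<in> S"
  shows "\<bar>expval eX s\<bar> + \<bar>expval eZ s\<bar> \<le> 1"
proof -
  obtain s2 s3 s4 where s2: "s2 \<in> S" and s3: "s3 \<in> S" and s4: "s4 \<in> S" and
    h: "expval eZ s = expval eZ s2" "expval eZ s2 = - expval eZ s3"
       "- expval eZ s3 = - expval eZ s4"
       "expval eX s = - expval eX s2" "- expval eX s2 = - expval eX s3"
       "- expval eX s3 = expval eX s4"
       "(1/2) *\<^sub>R s + (1/2) *\<^sub>R s3 = (1/2) *\<^sub>R s2 + (1/2) *\<^sub>R s4"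
    using assms(2,5) unfolding A12_symmetric_def A12_orbit_realizable_def by blast
  define rZ where "rZ l = xiZ 1 l - xiZ (-1) l" for l
  define rX where "rX l = xiX 1 l - xiX (-1) l" for l
  have om: "\<And>t. t \<in> S \<Longrightarrow> (\<forall>l. mu t l \<ge> 0) \<and> (\<Sum>l\<in>UNIV. mu t l) = 1"
    using assms(3) unfolding ontological_model_def by blast
  have rb: "\<bar>rZ l\<bar> \<le> 1 \<and> \<bar>rX l\<bar> \<le> 1" for l
  proof -
    have "xiZ 1 l \<ge> 0 \<and> xiZ (-1) l \<ge> 0 \<and> xiZ 1 l + xiZ (-1) l = 1"
         "xiX 1 l \<ge> 0 \<and> xiX (-1) l \<ge> 0 \<and> xiX 1 l + xiX (-1) l = 1"
      using assms(3) unfolding ontological_model_def by auto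
    then show ?thesis unfolding rZ_def rX_def by auto
  qed
  have evZ: "expval eZ t = (\<Sum>l\<in>UNIV. rZ l * mu t l)" if "t \<in> S" for t
  proof -
    have "prob eZ 1 t = (\<Sum>l\<in>UNIV. xiZ 1 l * mu t l)"
         "prob eZ (-1) t = (\<Sum>l\<in>UNIV. xiZ (-1) l * mu t l)"
      using assms(3) that unfolding ontological_model_def by auto
    then show ?thesis unfolding expval_def rZ_def
      by (simp add: sum_subtractf left_diff_distrib)
  qed
  have evX: "expval eX t = (\<Sum>l\<in>UNIV. rX l * mu t l)" if "t \<in> S" for t
  proof -
    have "prob eX 1 t = (\<Sum>l\<in>UNIV. xiX 1 l * mu t l)"
         "prob eX (-1) t = (\<Sum>l\<in>UNIV. xiX (-1) l * mu t l)"
      using assms(3) that unfolding ontological_model_def by auto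
    then show ?thesis unfolding expval_def rX_def
      by (simp add: sum_subtractf left_diff_distrib)
  qed
  have nc: "mu s l + mu s3 l = mu s2 l + mu s4 l" for l
  proof -
    let ?w = "\<lambda>i::nat. (1/2::real)"
    let ?f = "\<lambda>i::nat. if i = 0 then s else s3"
    let ?g = "\<lambda>i::nat. if i = 0 then s2 else s4"
    have "(\<Sum>i\<in>{0,1::nat}. ?w i *\<^sub>R ?f i) = (\<Sum>j\<in>{0,1::nat}. ?w j *\<^sub>R ?g j)"
      using h(7) by simp
    moreover have "(\<forall>i\<in>{0,1::nat}. ?w i \<ge> 0 \<and> ?f i \<in> S)"
      "(\<forall>i\<in>{0,1::nat}. ?w i \<ge> 0 \<and> ?g i \<in> S)" using assms(5) s2 s3 s4 by auto
    ultimately have "(\<Sum>i\<in>{0,1::nat}. ?w i * mu (?f i) l) = (\<Sum>j\<in>{0,1::nat}. ?w j * mu (?g j) l)"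
    proof -
      have "finite {0,1::nat}" by simp
      moreover have "sum ?w {0,1::nat} = 1" by simp
      ultimately show ?thesis
        using assms(4) \<open>(\<forall>i\<in>{0,1::nat}. ?w i \<ge> 0 \<and> ?f i \<in> S)\<close>
          \<open>(\<forall>i\<in>{0,1::nat}. ?w i \<ge> 0 \<and> ?g i \<in> S)\<close>
          \<open>(\<Sum>i\<in>{0,1::nat}. ?w i *\<^sub>R ?f i) = (\<Sum>j\<in>{0,1::nat}. ?w j *\<^sub>R ?g j)\<close>
        unfolding prep_noncontextual_def
        apply -
        apply (erule allE[where x="{0,1::nat}"], erule allE[where x="?w"], erule allE[where x="?f"])
        apply (erule allE[where x="{0,1::nat}"], erule allE[where x="?w"], erule allE[where x="?g"])
        by simp
    qed
    then show ?thesis by simp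
  qed
  have main: "sg * expval eZ s + tu * expval eX s \<le> 1"
    if "\<bar>sg\<bar> \<le> 1" "\<bar>tu\<bar> \<le> 1" for sg tu
  proof -
    have "sg * expval eZ s + tu * expval eX s
        = (sg/4) * (expval eZ s + expval eZ s2 - expval eZ s3 - expval eZ s4)
          + (tu/4) * (expval eX s - expval eX s2 - expval eX s3 + expval eX s4)"
    proof -
      have z2: "expval eZ s2 = expval eZ s" and z3: "expval eZ s3 = - expval eZ s"
        and z4: "expval eZ s4 = - expval eZ s" using h(1-3) by auto
      have x2: "expval eX s2 = - expval eX s" and x3: "expval eX s3 = - expval eX s"
        and x4: "expval eX s4 = expval eX s" using h(4-6) by auto
      show ?thesis unfolding z2 z3 z4 x2 x3 x4 by simp
    qed
    also have "\<dots> = (\<Sum>l\<in>UNIV. (sg/4) * (rZ l * mu s l) + (sg/4) * (rZ l * mu s2 l)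
          - (sg/4) * (rZ l * mu s3 l) - (sg/4) * (rZ l * mu s4 l)
          + ((tu/4) * (rX l * mu s l) - (tu/4) * (rX l * mu s2 l)
          - (tu/4) * (rX l * mu s3 l) + (tu/4) * (rX l * mu s4 l)))"
      unfolding sumlin using assms(5) s2 s3 s4 by (simp add: evZ evX)
    also have "\<dots> = (\<Sum>l\<in>UNIV. (sg * rZ l * (mu s l - mu s4 l) + tu * rX l * (mu s l - mu s2 l)) / 2)"
    proof (rule sum.cong)
      fix l
      have e: "mu s l + mu s3 l = mu s2 l + mu s4 l" by (rule nc)
      have e3: "mu s3 l = mu s2 l + mu s4 l - mu s l" using e by linarith
      show "(sg/4) * (rZ l * mu s l) + (sg/4) * (rZ l * mu s2 l)
          - (sg/4) * (rZ l * mu s3 l) - (sg/4) * (rZ l * mu s4 l)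
          + ((tu/4) * (rX l * mu s l) - (tu/4) * (rX l * mu s2 l)
          - (tu/4) * (rX l * mu s3 l) + (tu/4) * (rX l * mu s4 l))
          = (sg * rZ l * (mu s l - mu s4 l) + tu * rX l * (mu s l - mu s2 l)) / 2"
        unfolding e3 by (simp add: field_simps)
    qed simp
    also have "\<dots> \<le> (\<Sum>l\<in>UNIV. (mu s l + mu s3 l) / 2)"
    proof (rule sum_mono)
      fix l
      have "sg * rZ l * (mu s l - mu s4 l) + tu * rX l * (mu s l - mu s2 l) \<le> mu s l + mu s3 l"
        using key_pt[of "mu s l" "mu s2 l" "mu s3 l" "mu s4 l" "rZ l" "rX l" sg tu]
          om[OF assms(5)] om[OF s2] om[OF s3] om[OF s4] nc[of l] rb[of l] that by auto
      then show "(sg * rZ l * (mu s l - mu s4 l) + tu * rX l * (mu s l - mu s2 l)) / 2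
           \<le> (mu s l + mu s3 l) / 2" by simp
    qed
    also have "\<dots> = 1"
      using om[OF assms(5)] om[OF s3] by (simp add: sum_divide_distrib[symmetric] sum.distrib)
    finally show ?thesis .
  qed
  have "\<bar>expval eX s\<bar> + \<bar>expval eZ s\<bar> = sgn (expval eZ s) * expval eZ s + sgn (expval eX s) * expval eX s"
    by (simp add: sgn_if abs_if)
  also have "\<dots> \<le> 1" by (rule main) (simp_all add: abs_sgn_eq)
  finally show ?thesis .
qed

end
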